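(* Let $\mathbb M$ be the single-sample mechanism described in the context, let $\rho^a,\rho^b\in\mathbb R^M_{>0}$, and let $M_a=\{j\in M:\rho^a_j\ge\rho^b_j\}$ and $M_b=\{j\in M:\rho^a_j\le\rho^b_j\}$. Then $${\rm LW}^{\mathbb M(\rho^a,\rho^b)}+{\rm LW}^{\mathbb M(\rho^b,\rho^a)}\ \ge\ {\rm LW}^{{\rm PCA}(M_a,\rho^a)}+{\rm LW}^{{\rm PCA}(M_b,\rho^b)}.$$
   Context: Market model. Buyers $N_0=\{1,\dots,n\}$, sellers $M=\{1,\dots,m\}$, bipartite edge set $E\subseteq N_0\times M$; edge $(i,j)$ written $ij$; $E_S$ is the set of edges incident to participants in $S$ ($E_i=E_{\{i\}}$); $w(F)=\sum_{e\in F}w_e$. Each seller $j$ has a monotone submodular $f_j:2^{E_j}\to\mathbb R_+$ with $f_j(\emptyset)=0$, polymatroid $P_j=\{y\in\mathbb R^{E_j}_+:y(F)\le f_j(F)\ \forall F\}$ ($f_j(E_j)$ = her total amount of a homogeneous divisible good). Buyer $i$ has per-unit valuation $v_i>0$ and budget $B_i\ge0$ (fixed). For an allocation with seller valuations $\rho$ in a market with seller set $M'$: $x_i=w(E_i)$ for buyers, $x_j=f_j(E_j)-w(E_j)$ for sellers, ${\rm LW}=\sum_{i\in N_0}\min(v_ix_i,B_i)+\sum_{j\in M'}\rho_jx_j$. Polyhedral Clinching Auction ${\rm PCA}$ with step $\varepsilon>0$ on a market with sellers $M'$ and seller bids $\sigma_j$: for each $j\in M'$ add a virtual buyer $n+j$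 adjacent only to $j$ with bid $\sigma_j$ and budget $\infty$; extend $f_j$ by $f_j(F)=f_j(E_j)$ if $(n+j)j\in F$; let $N$ be all (real and virtual) buyers, $P'=\{w\ge0: w|_{E_j}\in P_j\ \forall j\in M'\}$ (extended $P_j$), using only edges to sellers in $M'$. Bids $v'_i$ (virtual $n+j$: $\sigma_j$) are assumed positive multiples of $\varepsilon$. State: $w,p,r$, clocks $c_i$, demands $d_i$; initially $w=0,p=0,r=0,c_i=0,d_i=\infty$, $l$ = first buyer. With $P_{w,d}=\{y\ge0:w+y\in P',\ y(E_k)\le d_k\ \forall k\}$ and $P^i_{w,d}(\xi)=\{u\in\mathbb R^{N\setminus\{i\}}_+:\exists y\in P_{w,d},y|_{E_i}=\xi,y(E_k)=u_k\ \forall k\ne i\}$: while some $d_i\ne0$: (1) for each buyer $i$ in turn choose a maximal $\xi_i\in\mathbb R^{E_i}_+$ with $P^i_{w,d}(\xi_i)=P^i_{w,d}(0)$, set $p_i\leftarrow p_i+c_i\xi_i(E_i)$, $w\leftarrow w+\xi_i$, reset every $d_k=(B_k-p_k)/c_k$ if $c_k<v'_k$ else $0$ ($\infty$ while $c_k=0$); then $r_j\leftarrow r_j+\sum_{ij\in E_j}c_i\xi_{ij}$; (2) $c_l\leftarrow c_l+\varepsilon$, update $d_l$ likewise; (3) advance $l$ cyclically. Output: $w$, $p$ for real buyers, revenues $r_j-p_{n+j}$. ${\rm LW}^{{\rm PCA}(M',\sigma)}$ denotes the LW, in the submarket with seller set $M'$ (edges to $M'$ only, constraint $P'$) and seller valuations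 $\sigma$, of the allocation output by PCA when all participants bid truthfully (buyers bid $v$, sellers $\sigma$). Mechanism $\mathbb M$ (given buyers' bids $v'$, budgets $B$, sellers' bids $\rho'$, samples $\rho^s$): $\tilde M=\{j:\rho^s_j\ge\rho'_j\}$, $\tilde E=\{ij\in E:j\in\tilde M\}$; run PCA on sellers $\tilde M$, edges $\tilde E$, bids $v'$, budgets $B$, seller bids $\sigma_j=\rho^s_j$, obtaining $(w,p,r)$; output $w$ on $\tilde E$ and $0$ elsewhere, payments $p_i$, revenues $\rho^s_j\,w(\tilde E_j)$ for $j\in\tilde M$ and $0$ otherwise. ${\rm LW}^{\mathbb M(\rho^a,\rho^b)}$ is the LW in the full market, evaluated at seller valuations $\rho^a$, of the allocation output by $\mathbb M$ when all participants bid truthfully ($v'=v$, $\rho'=\rho^a$) and the samples are $\rho^b$ (sellers not in $\tilde M$ keep all their goods). *)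

theory Defs
  imports Complex_Main "HOL-Library.Extended_Real" "HOL-Library.While_Combinator"
begin

text \<open>Market: real buyers 1..n, sellers 1..m, edges are pairs (i,j) :: nat \<times> nat.
  Virtual buyer of seller j is buyer n + j with the single edge (n + j, j).\<close>

definition bedges :: "(nat \<times> nat) set \<Rightarrow> nat \<Rightarrow> (nat \<times> nat) set" where
  "bedges X i = {e \<in> X. fst e = i}"

definition sedges :: "(nat \<times> nat) set \<Rightarrow> nat \<Rightarrow> (nat \<times> nat) set" where
  "sedges X j = {e \<in> X. snd e = j}"

definition buyersN :: "nat \<Rightarrow> nat set \<Rightarrow> nat set" where
  "buyersN n M' = {1..n} \<union> (\<lambda>j. n + j) ` M'"

definition edgesX :: "nat \<Rightarrow> (nat \<times> nat) set \<Rightarrow> nat set \<Rightarrow> (nat \<times> nat) set" where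
  "edgesX n E M' = {e \<in> E. snd e \<in> M'} \<union> (\<lambda>j. (n + j, j)) ` M'"

definition fext :: "nat \<Rightarrow> (nat \<times> nat) set \<Rightarrow> (nat \<Rightarrow> (nat \<times> nat) set \<Rightarrow> real)
    \<Rightarrow> nat \<Rightarrow> (nat \<times> nat) set \<Rightarrow> real" where
  "fext n E f j F = (if (n + j, j) \<in> F then f j (sedges E j) else f j F)"

definition bidx :: "nat \<Rightarrow> (nat \<Rightarrow> real) \<Rightarrow> (nat \<Rightarrow> real) \<Rightarrow> nat \<Rightarrow> real" where
  "bidx n v \<sigma> k = (if k \<le> n then v k else \<sigma> (k - n))"

definition Pprime :: "nat \<Rightarrow> (nat \<times> nat) set \<Rightarrow> (nat \<Rightarrow> (nat \<times> nat) set \<Rightarrow> real) \<Rightarrow> nat set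
    \<Rightarrow> ((nat \<times> nat) \<Rightarrow> real) set" where
  "Pprime n E f M' = {w. (\<forall>e. e \<notin> edgesX n E M' \<longrightarrow> w e = 0)
      \<and> (\<forall>e \<in> edgesX n E M'. 0 \<le> w e)
      \<and> (\<forall>j \<in> M'. \<forall>F. F \<subseteq> sedges (edgesX n E M') j \<longrightarrow> sum w F \<le> fext n E f j F)}"

definition Pwd :: "nat \<Rightarrow> (nat \<times> nat) set \<Rightarrow> (nat \<Rightarrow> (nat \<times> nat) set \<Rightarrow> real) \<Rightarrow> nat set
    \<Rightarrow> ((nat \<times> nat) \<Rightarrow> real) \<Rightarrow> (nat \<Rightarrow> ereal) \<Rightarrow> ((nat \<times> nat) \<Rightarrow> real) set" where
  "Pwd n E f M' w d = {y. (\<forall>e. e \<notin> edgesX n E M' \<longrightarrow> y e = 0)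
      \<and> (\<forall>e \<in> edgesX n E M'. 0 \<le> y e)
      \<and> (\<lambda>e. w e + y e) \<in> Pprime n E f M'
      \<and> (\<forall>k \<in> buyersN n M'. ereal (sum y (bedges (edgesX n E M') k)) \<le> d k)}"

text \<open>P^i_{w,d}(xi): vectors u indexed by N - {i} (represented as functions that vanish
  outside N - {i}).\<close>
definition Piwd :: "nat \<Rightarrow> (nat \<times> nat) set \<Rightarrow> (nat \<Rightarrow> (nat \<times> nat) set \<Rightarrow> real) \<Rightarrow> nat set
    \<Rightarrow> ((nat \<times> nat) \<Rightarrow> real) \<Rightarrow> (nat \<Rightarrow> ereal) \<Rightarrow> nat \<Rightarrow> ((nat \<times> nat) \<Rightarrow> real)
    \<Rightarrow> (nat \<Rightarrow> real) set" where
  "Piwd n E f M' w d i \<xi> = {u. (\<forall>k. k \<notin> buyersN n M' - {i} \<longrightarrow> u k = 0)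
      \<and> (\<exists>y \<in> Pwd n E f M' w d.
            (\<forall>e \<in> bedges (edgesX n E M') i. y e = \<xi> e)
          \<and> (\<forall>k \<in> buyersN n M' - {i}. u k = sum y (bedges (edgesX n E M') k)))}"

definition XiSet :: "nat \<Rightarrow> (nat \<times> nat) set \<Rightarrow> (nat \<Rightarrow> (nat \<times> nat) set \<Rightarrow> real) \<Rightarrow> nat set
    \<Rightarrow> ((nat \<times> nat) \<Rightarrow> real) \<Rightarrow> (nat \<Rightarrow> ereal) \<Rightarrow> nat \<Rightarrow> ((nat \<times> nat) \<Rightarrow> real) set" where
  "XiSet n E f M' w d i = {\<xi>. (\<forall>e. e \<notin> bedges (edgesX n E M') i \<longrightarrow> \<xi> e = 0)
      \<and> (\<forall>e. 0 \<le> \<xi> e)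
      \<and> Piwd n E f M' w d i \<xi> = Piwd n E f M' w d i (\<lambda>_. 0)}"

definition choose_xi :: "nat \<Rightarrow> (nat \<times> nat) set \<Rightarrow> (nat \<Rightarrow> (nat \<times> nat) set \<Rightarrow> real) \<Rightarrow> nat set
    \<Rightarrow> ((nat \<times> nat) \<Rightarrow> real) \<Rightarrow> (nat \<Rightarrow> ereal) \<Rightarrow> nat \<Rightarrow> ((nat \<times> nat) \<Rightarrow> real)" where
  "choose_xi n E f M' w d i = (SOME \<xi>. \<xi> \<in> XiSet n E f M' w d i
      \<and> (\<forall>\<xi>' \<in> XiSet n E f M' w d i. (\<forall>e. \<xi> e \<le> \<xi>' e) \<longrightarrow> \<xi>' = \<xi>))"

record pca_state =
  sw :: "(nat \<times> nat) \<Rightarrow> real"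
  sp :: "nat \<Rightarrow> real"
  sr :: "nat \<Rightarrow> real"
  sc :: "nat \<Rightarrow> real"
  sd :: "nat \<Rightarrow> ereal"
  sl :: nat

text \<open>Demand of buyer k: infinity while c_k = 0; (B_k - p_k)/c_k if c_k below the bid
  (infinity for virtual buyers, whose budget is infinite); 0 otherwise.\<close>
definition dval :: "nat \<Rightarrow> (nat \<Rightarrow> real) \<Rightarrow> (nat \<Rightarrow> real) \<Rightarrow> (nat \<Rightarrow> real)
    \<Rightarrow> (nat \<Rightarrow> real) \<Rightarrow> (nat \<Rightarrow> real) \<Rightarrow> nat \<Rightarrow> ereal" where
  "dval n v B \<sigma> c p k =
     (if c k = 0 then \<infinity>
      else if c k < bidx n v \<sigma> k then (if k \<le> n then ereal ((B k - p k) / c k) else \<infinity>)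
      else 0)"

definition clinch_step :: "nat \<Rightarrow> (nat \<times> nat) set \<Rightarrow> (nat \<Rightarrow> (nat \<times> nat) set \<Rightarrow> real)
    \<Rightarrow> (nat \<Rightarrow> real) \<Rightarrow> (nat \<Rightarrow> real) \<Rightarrow> nat set \<Rightarrow> (nat \<Rightarrow> real)
    \<Rightarrow> pca_state \<Rightarrow> nat \<Rightarrow> pca_state" where
  "clinch_step n E f v B M' \<sigma> s i =
     (let X = edgesX n E M';
          \<xi> = choose_xi n E f M' (sw s) (sd s) i;
          p' = (sp s)(i := sp s i + sc s i * sum \<xi> (bedges X i));
          w' = (\<lambda>e. sw s e + \<xi> e);
          r' = (\<lambda>j. sr s j + (\<Sum>e \<in> sedges X j. sc s (fst e) * \<xi> e));
          d' = dval n v B \<sigma> (sc s) p'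
      in s\<lparr>sw := w', sp := p', sr := r', sd := d'\<rparr>)"

text \<open>One iteration of the while loop: steps (1), (2), (3). Buyers are processed in
  increasing order of index; sl is the position of the current buyer l in that order.\<close>
definition pca_round :: "nat \<Rightarrow> (nat \<times> nat) set \<Rightarrow> (nat \<Rightarrow> (nat \<times> nat) set \<Rightarrow> real)
    \<Rightarrow> real \<Rightarrow> (nat \<Rightarrow> real) \<Rightarrow> (nat \<Rightarrow> real) \<Rightarrow> nat set \<Rightarrow> (nat \<Rightarrow> real)
    \<Rightarrow> pca_state \<Rightarrow> pca_state" where
  "pca_round n E f \<epsilon> v B M' \<sigma> s =
     (let bs = sorted_list_of_set (buyersN n M');
          s1 = foldl (clinch_step n E f v B M' \<sigma>) s bs;
          l = bs ! sl s1;
          c' = (sc s1)(l := sc s1 l + \<epsilon>);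
          d' = (sd s1)(l := dval n v B \<sigma> c' (sp s1) l)
      in s1\<lparr>sc := c', sd := d', sl := (sl s1 + 1) mod length bs\<rparr>)"

definition pca_init :: pca_state where
  "pca_init = \<lparr>sw = (\<lambda>_. 0), sp = (\<lambda>_. 0), sr = (\<lambda>_. 0), sc = (\<lambda>_. 0),
               sd = (\<lambda>_. \<infinity>), sl = 0\<rparr>"

text \<open>Final state of PCA (if the loop does not terminate, the initial state is returned;
  the loop terminates under the standing assumptions).\<close>
definition pca :: "nat \<Rightarrow> (nat \<times> nat) set \<Rightarrow> (nat \<Rightarrow> (nat \<times> nat) set \<Rightarrow> real)
    \<Rightarrow> real \<Rightarrow> (nat \<Rightarrow> real) \<Rightarrow> (nat \<Rightarrow> real) \<Rightarrow> nat set \<Rightarrow> (nat \<Rightarrow> real) \<Rightarrow> pca_state" where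
  "pca n E f \<epsilon> v B M' \<sigma> =
     (case while_option (\<lambda>s. \<exists>i \<in> buyersN n M'. sd s i \<noteq> 0)
                        (pca_round n E f \<epsilon> v B M' \<sigma>) pca_init of
        Some s \<Rightarrow> s | None \<Rightarrow> pca_init)"

definition LW_sub :: "nat \<Rightarrow> (nat \<times> nat) set \<Rightarrow> (nat \<Rightarrow> (nat \<times> nat) set \<Rightarrow> real)
    \<Rightarrow> (nat \<Rightarrow> real) \<Rightarrow> (nat \<Rightarrow> real) \<Rightarrow> nat set \<Rightarrow> (nat \<Rightarrow> real) \<Rightarrow> ((nat \<times> nat) \<Rightarrow> real) \<Rightarrow> real" where
  "LW_sub n E f v B M' \<rho> w =
     (\<Sum>i \<in> {1..n}. min (v i * sum w (bedges {e \<in> E. snd e \<in> M'} i)) (B i))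
     + (\<Sum>j \<in> M'. \<rho> j * (f j (sedges E j) - sum w (sedges E j)))"

definition LW_full :: "nat \<Rightarrow> nat \<Rightarrow> (nat \<times> nat) set \<Rightarrow> (nat \<Rightarrow> (nat \<times> nat) set \<Rightarrow> real)
    \<Rightarrow> (nat \<Rightarrow> real) \<Rightarrow> (nat \<Rightarrow> real) \<Rightarrow> (nat \<Rightarrow> real) \<Rightarrow> ((nat \<times> nat) \<Rightarrow> real) \<Rightarrow> real" where
  "LW_full n m E f v B \<rho> w =
     (\<Sum>i \<in> {1..n}. min (v i * sum w (bedges E i)) (B i))
     + (\<Sum>j \<in> {1..m}. \<rho> j * (f j (sedges E j) - sum w (sedges E j)))"

definition LW_PCA :: "nat \<Rightarrow> (nat \<times> nat) set \<Rightarrow> (nat \<Rightarrow> (nat \<times> nat) set \<Rightarrow> real)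
    \<Rightarrow> real \<Rightarrow> (nat \<Rightarrow> real) \<Rightarrow> (nat \<Rightarrow> real) \<Rightarrow> nat set \<Rightarrow> (nat \<Rightarrow> real) \<Rightarrow> real" where
  "LW_PCA n E f \<epsilon> v B M' \<sigma> =
     LW_sub n E f v B M' \<sigma> (\<lambda>e. if e \<in> E \<and> snd e \<in> M' then sw (pca n E f \<epsilon> v B M' \<sigma>) e else 0)"

text \<open>Allocation output by mechanism M with buyer bids v, seller bids \<rho>' and samples \<rho>s.\<close>
definition mech_alloc :: "nat \<Rightarrow> nat \<Rightarrow> (nat \<times> nat) set \<Rightarrow> (nat \<Rightarrow> (nat \<times> nat) set \<Rightarrow> real)
    \<Rightarrow> real \<Rightarrow> (nat \<Rightarrow> real) \<Rightarrow> (nat \<Rightarrow> real) \<Rightarrow> (nat \<Rightarrow> real) \<Rightarrow> (nat \<Rightarrow> real)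
    \<Rightarrow> ((nat \<times> nat) \<Rightarrow> real)" where
  "mech_alloc n m E f \<epsilon> v B \<rho>' \<rho>s =
     (let Mt = {j \<in> {1..m}. \<rho>s j \<ge> \<rho>' j};
          s = pca n E f \<epsilon> v B Mt \<rho>s
      in (\<lambda>e. if e \<in> E \<and> snd e \<in> Mt then sw s e else 0))"

text \<open>LW^{M(\<rho>a, \<rho>b)}: truthful bids, valuations \<rho>a, samples \<rho>b.\<close>
definition LW_mech :: "nat \<Rightarrow> nat \<Rightarrow> (nat \<times> nat) set \<Rightarrow> (nat \<Rightarrow> (nat \<times> nat) set \<Rightarrow> real)
    \<Rightarrow> real \<Rightarrow> (nat \<Rightarrow> real) \<Rightarrow> (nat \<Rightarrow> real) \<Rightarrow> (nat \<Rightarrow> real) \<Rightarrow> (nat \<Rightarrow> real) \<Rightarrow> real" where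
  "LW_mech n m E f \<epsilon> v B \<rho>a \<rho>b =
     LW_full n m E f v B \<rho>a (mech_alloc n m E f \<epsilon> v B \<rho>a \<rho>b)"

end

theory Submission
  imports Defs "HOL-Analysis.Analysis"
begin
declare split_paired_All[simp del] split_paired_Ex[simp del]

lemma cont_sum_coord: "continuous_on UNIV (\<lambda>y::(nat\<times>nat)\<Rightarrow>real. sum y F)"
  by (intro continuous_intros) simp

lemma compact_box:
  fixes S :: "(nat\<times>nat) \<Rightarrow> real set"
  assumes "\<And>e. compact (S e)"
  shows "compact (PiE UNIV S)"
proof -
  have "compactin (product_topology (\<lambda>_. euclidean) UNIV) (PiE UNIV S)"
    using assms by (subst compactin_PiE) auto
  then show ?thesis by (simp add: euclidean_product_topology)
qed

lemma closed_ereal_le: "closed {y::(nat\<times>nat)\<Rightarrow>real. ereal (sum y F) \<le> c}"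
proof (cases c)
  case (real r)
  then show ?thesis using closed_Collect_le[OF cont_sum_coord continuous_on_const, of F r] by simp
qed auto

lemma closed_constimp: "(P \<Longrightarrow> closed {x. Q x}) \<Longrightarrow> closed {x. P \<longrightarrow> Q x}"
  by (cases P) auto

lemma Pprime_nonneg: "w \<in> Pprime n E f M' \<Longrightarrow> 0 \<le> w e"
proof -
  assume "w \<in> Pprime n E f M'"
  then have "(\<forall>e. e \<notin> edgesX n E M' \<longrightarrow> w e = 0) \<and> (\<forall>e\<in>edgesX n E M'. 0 \<le> w e)"
    unfolding Pprime_def by blast
  then show ?thesis by (metis order_refl)
qed

lemma Pprime_down:
  assumes z: "z \<in> Pprime n E f M'" and x0: "\<And>e. 0 \<le> x e" and xz: "\<And>e. x e \<le> z e"
  shows "x \<in> Pprime n E f M'"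
proof -
  define X where "X = edgesX n E M'"
  have h: "(\<forall>e. e \<notin> X \<longrightarrow> z e = 0) \<and> (\<forall>j\<in>M'. \<forall>F. F \<subseteq> sedges X j \<longrightarrow> sum z F \<le> fext n E f j F)"
    using z unfolding Pprime_def X_def by blast
  have 1: "\<forall>e. e \<notin> X \<longrightarrow> x e = 0"
  proof (intro allI impI)
    fix e assume "e \<notin> X"
    then have "z e = 0" using h by blast
    then show "x e = 0" using x0[of e] xz[of e] by simp
  qed
  have 3: "\<forall>j\<in>M'. \<forall>F. F \<subseteq> sedges X j \<longrightarrow> sum x F \<le> fext n E f j F"
  proof (intro ballI allI impI)
    fix j F assume "j \<in> M'" "F \<subseteq> sedges X j"
    then have "sum z F \<le> fext n E f j F" using h by blast
    moreover have "sum x F \<le> sum z F" by (rule sum_mono) (rule xz)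
    ultimately show "sum x F \<le> fext n E f j F" by simp
  qed
  show ?thesis unfolding Pprime_def using 1 3 x0 unfolding X_def by blast
qed

lemma Pwd_nonneg: "y \<in> Pwd n E f M' w d \<Longrightarrow> 0 \<le> y e"
proof -
  assume "y \<in> Pwd n E f M' w d"
  then have "(\<forall>e. e \<notin> edgesX n E M' \<longrightarrow> y e = 0) \<and> (\<forall>e\<in>edgesX n E M'. 0 \<le> y e)"
    unfolding Pwd_def by blast
  then show ?thesis by (metis order_refl)
qed

lemma Piwd_down:
  assumes wP: "w \<in> Pprime n E f M'" and uP: "u \<in> Piwd n E f M' w d i \<xi>"
  shows "u \<in> Piwd n E f M' w d i (\<lambda>_. 0)"
proof -
  define X where "X = edgesX n E M'"
  from uP obtain y where y: "y \<in> Pwd n E f M' w d"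
    and u: "\<forall>k\<in>buyersN n M' - {i}. u k = sum y (bedges X k)"
    and uz: "\<forall>k. k \<notin> buyersN n M' - {i} \<longrightarrow> u k = 0"
    unfolding Piwd_def X_def by auto
  define y' where "y' = (\<lambda>e. if e \<in> bedges X i then 0 else y e)"
  have ynn: "\<And>e. 0 \<le> y e" using Pwd_nonneg[OF y] .
  have y'le: "y' e \<le> y e" for e using ynn unfolding y'_def by auto
  have y'nn: "0 \<le> y' e" for e using ynn unfolding y'_def by auto
  have sle: "sum y' F \<le> sum y F" for F by (rule sum_mono) (rule y'le)
  have y'P: "y' \<in> Pwd n E f M' w d"
  proof -
    have A: "(\<lambda>e. w e + y' e) \<in> Pprime n E f M'"
      apply (rule Pprime_down[where z="\<lambda>e. w e + y e"])
      using y unfolding Pwd_def apply blast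
      using Pprime_nonneg[OF wP] y'nn y'le by (auto intro: add_nonneg_nonneg)
    have B: "\<forall>k\<in>buyersN n M'. ereal (sum y' (bedges X k)) \<le> d k"
    proof
      fix k assume k: "k \<in> buyersN n M'"
      have "ereal (sum y' (bedges X k)) \<le> ereal (sum y (bedges X k))" using sle by simp
      moreover have "ereal (sum y (bedges X k)) \<le> d k" using y k unfolding Pwd_def X_def by blast
      ultimately show "ereal (sum y' (bedges X k)) \<le> d k" by (rule order_trans)
    qed
    have C: "\<forall>e. e \<notin> edgesX n E M' \<longrightarrow> y' e = 0"
    proof (intro allI impI)
      fix e assume "e \<notin> edgesX n E M'"
      then have "y e = 0" using y unfolding Pwd_def by blast
      then show "y' e = 0" unfolding y'_def by simp
    qed
    show ?thesis unfolding Pwd_def using A B C y'nn unfolding X_def by blast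
  qed
  have eqs: "k \<noteq> i \<Longrightarrow> sum y' (bedges X k) = sum y (bedges X k)" for k
    by (rule sum.cong) (auto simp: y'_def bedges_def)
  have a1: "\<forall>e\<in>bedges X i. y' e = 0" by (simp add: y'_def)
  have a2: "\<forall>k\<in>buyersN n M' - {i}. u k = sum y' (bedges X k)" using u eqs by auto
  show ?thesis using uz y'P a1 a2 unfolding Piwd_def X_def by blast
qed

lemma exists_max_xi:
  assumes finE: "finite E" and finM: "finite M'" and wP: "w \<in> Pprime n E f M'"
    and zP: "(\<lambda>_. 0) \<in> Pwd n E f M' w d"
  shows "\<exists>\<xi>. \<xi> \<in> XiSet n E f M' w d i \<and> (\<forall>\<xi>'\<in>XiSet n E f M' w d i. (\<forall>e. \<xi> e \<le> \<xi>' e) \<longrightarrow> \<xi>' = \<xi>)"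
proof -
  define X where "X = edgesX n E M'"
  define D where "D = bedges X i"
  define K where "K = XiSet n E f M' w d i"
  define P0 where "P0 = Piwd n E f M' w d i (\<lambda>_. 0)"
  have finX: "finite X" unfolding X_def edgesX_def using finE finM by auto
  have DX: "D \<subseteq> X" unfolding D_def bedges_def by auto
  have finD: "finite D" using finX DX finite_subset by blast
  define bnd where "bnd e = fext n E f (snd e) {e}" for e
  have Xsnd: "e \<in> X \<Longrightarrow> snd e \<in> M'" for e unfolding X_def edgesX_def by auto
  have yz: "y \<in> Pwd n E f M' w d \<Longrightarrow> e \<notin> X \<Longrightarrow> y e = 0" for y e
    unfolding Pwd_def X_def by blast
  have yb: "y e \<le> bnd e" if y: "y \<in> Pwd n E f M' w d" and e: "e \<in> X" for y e
  proof -
    have "(\<lambda>e. w e + y e) \<in> Pprime n E f M'" using y unfolding Pwd_def by blast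
    moreover have "{e} \<subseteq> sedges (edgesX n E M') (snd e)" using e unfolding X_def sedges_def by auto
    ultimately have "sum (\<lambda>e. w e + y e) {e} \<le> fext n E f (snd e) {e}"
      using Xsnd[OF e] unfolding Pprime_def by blast
    then show ?thesis using Pprime_nonneg[OF wP, of e] unfolding bnd_def by simp
  qed
  define Ku where "Ku u = {y \<in> Pwd n E f M' w d. \<forall>k. k \<in> buyersN n M' - {i} \<longrightarrow> u k = sum y (bedges X k)}" for u
  define Box where "Box = PiE UNIV (\<lambda>e. if e \<in> X then {0..bnd e} else {0::real})"
  have Box_c: "compact Box" unfolding Box_def by (rule compact_box) auto
  have Pwd_Box: "Pwd n E f M' w d \<subseteq> Box"
  proof
    fix y assume y: "y \<in> Pwd n E f M' w d"
    have "y e \<in> (if e \<in> X then {0..bnd e} else {0})" for e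
      using yz[OF y, of e] yb[OF y, of e] Pwd_nonneg[OF y, of e] by auto
    then show "y \<in> Box" unfolding Box_def by (simp add: PiE_iff)
  qed
  have Pwd_closed: "closed (Pwd n E f M' w d)"
  proof -
    have "Pwd n E f M' w d = {y. (\<forall>e. e \<notin> X \<longrightarrow> y e = 0) \<and> (\<forall>e. e \<in> X \<longrightarrow> 0 \<le> y e)
       \<and> (\<forall>e. e \<notin> X \<longrightarrow> w e + y e = 0) \<and> (\<forall>e. e \<in> X \<longrightarrow> 0 \<le> w e + y e)
       \<and> (\<forall>j. j \<in> M' \<longrightarrow> (\<forall>F. F \<subseteq> sedges X j \<longrightarrow> sum (\<lambda>e. w e + y e) F \<le> fext n E f j F))
       \<and> (\<forall>k. k \<in> buyersN n M' \<longrightarrow> ereal (sum y (bedges X k)) \<le> d k)}"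
      unfolding Pwd_def Pprime_def X_def by blast
    also have "closed \<dots>"
      by (intro closed_Collect_conj closed_Collect_all closed_constimp closed_ereal_le
          closed_Collect_eq closed_Collect_le continuous_intros) simp_all
    finally show ?thesis .
  qed
  have Ku_c: "compact (Ku u)" for u
  proof -
    have "Ku u = (Pwd n E f M' w d \<inter> {y. \<forall>k. k \<in> buyersN n M' - {i} \<longrightarrow> u k = sum y (bedges X k)}) \<inter> Box"
      unfolding Ku_def using Pwd_Box by blast
    also have "compact \<dots>"
      by (intro closed_Int_compact closed_Int Pwd_closed Box_c closed_Collect_all closed_constimp
          closed_Collect_eq continuous_intros) simp_all
    finally show ?thesis .
  qed
  define g where "g y = (\<lambda>e. if e \<in> D then y e else 0)" for y :: "nat \<times> nat \<Rightarrow> real"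
  have g_c: "continuous_on UNIV g"
  proof (rule continuous_on_coordinatewise_then_product)
    fix e show "continuous_on UNIV (\<lambda>y. g y e)" by (cases "e \<in> D") (simp_all add: g_def)
  qed
  define BoxD where "BoxD = PiE UNIV (\<lambda>e. if e \<in> D then {0..bnd e} else {0::real})"
  have BoxD_c: "compact BoxD" unfolding BoxD_def by (rule compact_box) auto
  have u0: "(\<lambda>_. 0) \<in> P0"
  proof -
    have "\<forall>e\<in>bedges X i. (0::real) = 0" by simp
    then show ?thesis unfolding P0_def Piwd_def X_def using zP by (intro CollectI conjI bexI[of _ "\<lambda>_. 0"]) auto
  qed
  have K_eq: "K = BoxD \<inter> (\<Inter>u\<in>P0. g ` Ku u)"
  proof (intro equalityI subsetI)
    fix \<xi> assume xi: "\<xi> \<in> K"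
    then have xz: "\<forall>e. e \<notin> D \<longrightarrow> \<xi> e = 0" and xnn: "\<forall>e. 0 \<le> \<xi> e"
      and eq: "Piwd n E f M' w d i \<xi> = P0"
      unfolding K_def XiSet_def D_def X_def P0_def by auto
    have gen: "\<exists>y\<in>Ku u. \<forall>e\<in>D. y e = \<xi> e" if u: "u \<in> P0" for u
    proof -
      from u eq have "u \<in> Piwd n E f M' w d i \<xi>" by simp
      then obtain y where "y \<in> Pwd n E f M' w d" "\<forall>e\<in>D. y e = \<xi> e"
        "\<forall>k\<in>buyersN n M' - {i}. u k = sum y (bedges X k)"
        unfolding Piwd_def D_def X_def by auto
      then show ?thesis unfolding Ku_def by blast
    qed
    have "\<xi> \<in> BoxD"
    proof -
      obtain y where y: "y \<in> Ku (\<lambda>_. 0)" and yx: "\<forall>e\<in>D. y e = \<xi> e" using gen[OF u0] by blast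
      have "\<xi> e \<in> (if e \<in> D then {0..bnd e} else {0})" for e
      proof (cases "e \<in> D")
        case True
        then have "\<xi> e \<le> bnd e" using yb[of y e] y yx DX unfolding Ku_def by auto
        moreover have "0 \<le> \<xi> e" using xnn by blast
        ultimately show ?thesis using True by auto
      qed (use xz in auto)
      then show ?thesis unfolding BoxD_def by (simp add: PiE_iff)
    qed
    moreover have "\<xi> \<in> g ` Ku u" if uP0: "u \<in> P0" for u
    proof -
      obtain y where y: "y \<in> Ku u" and yx: "\<forall>e\<in>D. y e = \<xi> e" using gen[OF uP0] by blast
      have "g y = \<xi>" unfolding g_def using yx xz by auto
      then show ?thesis using y by blast
    qed
    ultimately show "\<xi> \<in> BoxD \<inter> (\<Inter>u\<in>P0. g ` Ku u)" by blast
  next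
    fix \<xi> assume xi: "\<xi> \<in> BoxD \<inter> (\<Inter>u\<in>P0. g ` Ku u)"
    have bx: "\<xi> e \<in> (if e \<in> D then {0..bnd e} else {0})" for e
      using xi unfolding BoxD_def by (simp add: PiE_iff)
    have xz: "\<forall>e. e \<notin> bedges (edgesX n E M') i \<longrightarrow> \<xi> e = 0"
      using bx unfolding D_def X_def by (metis empty_iff insert_iff)
    have xnn: "\<forall>e. 0 \<le> \<xi> e" using bx by (metis atLeastAtMost_iff order_refl singletonD)
    have "P0 \<subseteq> Piwd n E f M' w d i \<xi>"
    proof
      fix u assume u: "u \<in> P0"
      then obtain y where y: "y \<in> Ku u" and gy: "\<xi> = g y" using xi by blast
      have uz: "\<forall>k. k \<notin> buyersN n M' - {i} \<longrightarrow> u k = 0" using u unfolding P0_def Piwd_def by blast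
      have "\<forall>e\<in>bedges X i. y e = \<xi> e" using gy unfolding g_def D_def by simp
      then show "u \<in> Piwd n E f M' w d i \<xi>" using y uz unfolding Piwd_def Ku_def X_def by blast
    qed
    moreover have "Piwd n E f M' w d i \<xi> \<subseteq> P0" unfolding P0_def using Piwd_down[OF wP] by blast
    ultimately show "\<xi> \<in> K" unfolding K_def XiSet_def P0_def using xz xnn by blast
  qed
  have K_c: "compact K"
  proof -
    have "closed (\<Inter>u\<in>P0. g ` Ku u)"
      by (intro closed_INT ballI compact_imp_closed compact_continuous_image continuous_on_subset[OF g_c] Ku_c) simp
    then have "compact ((\<Inter>u\<in>P0. g ` Ku u) \<inter> BoxD)" using BoxD_c by (rule closed_Int_compact)
    then show ?thesis using K_eq by (simp add: Int_commute)
  qed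
  have K_ne: "(\<lambda>_. 0) \<in> K" unfolding K_def XiSet_def by simp
  obtain \<xi> where xiK: "\<xi> \<in> K" and xmax: "\<forall>\<xi>'\<in>K. sum \<xi>' D \<le> sum \<xi> D"
    using continuous_attains_sup[OF K_c _ continuous_on_subset[OF cont_sum_coord]] K_ne by blast
  have Kz: "\<xi>' \<in> K \<Longrightarrow> e \<notin> D \<Longrightarrow> \<xi>' e = 0" for \<xi>' e unfolding K_def XiSet_def D_def X_def by blast
  have "\<forall>\<xi>'\<in>K. (\<forall>e. \<xi> e \<le> \<xi>' e) \<longrightarrow> \<xi>' = \<xi>"
  proof (intro ballI impI ext)
    fix \<xi>' e assume x': "\<xi>' \<in> K" and le: "\<forall>e. \<xi> e \<le> \<xi>' e"
    show "\<xi>' e = \<xi> e"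
    proof (cases "e \<in> D")
      case True
      have "sum \<xi> D \<le> sum \<xi>' D" using le by (simp add: sum_mono)
      then have "sum \<xi> D = sum \<xi>' D" using xmax x' by (meson order_antisym)
      then show ?thesis using sum_mono_inv[of \<xi> D \<xi>' e] le True finD by simp
    next
      case False
      then show ?thesis using Kz[OF x' False] Kz[OF xiK False] by simp
    qed
  qed
  then show ?thesis using xiK unfolding K_def by blast
qed
definition Inv :: "nat \<Rightarrow> (nat \<times> nat) set \<Rightarrow> (nat \<Rightarrow> (nat \<times> nat) set \<Rightarrow> real)
    \<Rightarrow> (nat \<Rightarrow> real) \<Rightarrow> (nat \<Rightarrow> real) \<Rightarrow> nat set \<Rightarrow> (nat \<Rightarrow> real) \<Rightarrow> pca_state \<Rightarrow> bool" where
  "Inv n E f v B M' \<sigma> s \<longleftrightarrow> sw s \<in> Pprime n E f M' \<and> sd s = dval n v B \<sigma> (sc s) (sp s)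
     \<and> (\<forall>k. 0 \<le> sc s k) \<and> (\<forall>k\<in>{1..n}. sp s k \<le> B k)"

lemma buyersN_le: "k \<in> buyersN n M' \<Longrightarrow> \<forall>j\<in>M'. 0 < j \<Longrightarrow> k \<le> n \<Longrightarrow> k \<in> {1..n}"
  unfolding buyersN_def by auto

lemma Inv_zero:
  assumes I: "Inv n E f v B M' \<sigma> s" and M0: "\<forall>j\<in>M'. 0 < j"
  shows "(\<lambda>_. 0) \<in> Pwd n E f M' (sw s) (sd s)"
proof -
  have wP: "sw s \<in> Pprime n E f M'" and dd: "sd s = dval n v B \<sigma> (sc s) (sp s)"
    and c0: "\<forall>k. 0 \<le> sc s k" and pB: "\<forall>k\<in>{1..n}. sp s k \<le> B k" using I unfolding Inv_def by auto
  have "0 \<le> sd s k" if k: "k \<in> buyersN n M'" for k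
  proof -
    have "0 \<le> dval n v B \<sigma> (sc s) (sp s) k"
    proof (cases "k \<le> n")
      case True
      then have "k \<in> {1..n}" using buyersN_le[OF k M0] by blast
      then have "0 \<le> B k - sp s k" using pB by auto
      moreover have "0 \<le> sc s k" using c0 by blast
      ultimately show ?thesis unfolding dval_def by auto
    next
      case False
      then show ?thesis unfolding dval_def by auto
    qed
    then show ?thesis using dd by simp
  qed
  then show ?thesis unfolding Pwd_def using wP by (simp add: zero_ereal_def)
qed

lemma Inv_step:
  assumes I: "Inv n E f v B M' \<sigma> s" and finE: "finite E" and finM: "finite M'"
    and M0: "\<forall>j\<in>M'. 0 < j" and iN: "i \<in> buyersN n M'"
  shows "Inv n E f v B M' \<sigma> (clinch_step n E f v B M' \<sigma> s i)"
proof -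
  define X where "X = edgesX n E M'"
  define \<xi> where "\<xi> = choose_xi n E f M' (sw s) (sd s) i"
  have wP: "sw s \<in> Pprime n E f M'" and dd: "sd s = dval n v B \<sigma> (sc s) (sp s)"
    and c0: "\<forall>k. 0 \<le> sc s k" and pB: "\<forall>k\<in>{1..n}. sp s k \<le> B k" using I unfolding Inv_def by auto
  have zP: "(\<lambda>_. 0) \<in> Pwd n E f M' (sw s) (sd s)" by (rule Inv_zero[OF I M0])
  have xi: "\<xi> \<in> XiSet n E f M' (sw s) (sd s) i"
    using someI_ex[OF exists_max_xi[OF finE finM wP zP, of i]] unfolding \<xi>_def choose_xi_def by blast
  then have xz: "\<forall>e. e \<notin> bedges X i \<longrightarrow> \<xi> e = 0" and xnn: "\<forall>e. 0 \<le> \<xi> e"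
    and eq: "Piwd n E f M' (sw s) (sd s) i \<xi> = Piwd n E f M' (sw s) (sd s) i (\<lambda>_. 0)"
    unfolding XiSet_def X_def by auto
  have u0: "(\<lambda>_. 0) \<in> Piwd n E f M' (sw s) (sd s) i (\<lambda>_. 0)"
  proof -
    have "\<forall>e\<in>bedges X i. (0::real) = 0" by simp
    then show ?thesis unfolding Piwd_def X_def using zP by (intro CollectI conjI bexI[of _ "\<lambda>_. 0"]) auto
  qed
  then have "(\<lambda>_. 0) \<in> Piwd n E f M' (sw s) (sd s) i \<xi>" using eq by simp
  then obtain y where y: "y \<in> Pwd n E f M' (sw s) (sd s)" and yx: "\<forall>e\<in>bedges X i. y e = \<xi> e"
    unfolding Piwd_def X_def by blast
  have ynn: "0 \<le> y e" for e using Pwd_nonneg[OF y] .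
  have w': "(\<lambda>e. sw s e + \<xi> e) \<in> Pprime n E f M'"
  proof (rule Pprime_down[where z="\<lambda>e. sw s e + y e"])
    show "(\<lambda>e. sw s e + y e) \<in> Pprime n E f M'" using y unfolding Pwd_def by blast
    show "0 \<le> sw s e + \<xi> e" for e using Pprime_nonneg[OF wP, of e] xnn by (simp add: add_nonneg_nonneg)
    show "sw s e + \<xi> e \<le> sw s e + y e" for e
    proof (cases "e \<in> bedges X i")
      case True then show ?thesis using yx by simp
    next
      case False then show ?thesis using xz ynn[of e] by simp
    qed
  qed
  have sxy: "sum \<xi> (bedges X i) = sum y (bedges X i)" using yx by simp
  have sle: "ereal (sum \<xi> (bedges X i)) \<le> sd s i" using y iN sxy unfolding Pwd_def X_def by auto
  have snn: "0 \<le> sum \<xi> (bedges X i)" using xnn by (simp add: sum_nonneg)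
  have pi: "sp s i + sc s i * sum \<xi> (bedges X i) \<le> B i" if iN': "i \<in> {1..n}"
  proof -
    have iln: "i \<le> n" using iN' by simp
    have ci: "0 \<le> sc s i" using c0 by blast
    have pBi: "sp s i \<le> B i" using pB iN' by blast
    show ?thesis
    proof (cases "sc s i = 0")
      case True then show ?thesis using pBi by simp
    next
      case cne: False
      show ?thesis
      proof (cases "sc s i < v i")
        case True
        then have "sd s i = ereal ((B i - sp s i) / sc s i)" using dd cne iln unfolding dval_def bidx_def by simp
        then have "sum \<xi> (bedges X i) \<le> (B i - sp s i) / sc s i" using sle by simp
        then have "sc s i * sum \<xi> (bedges X i) \<le> B i - sp s i" using cne ci
          by (simp add: pos_le_divide_eq mult.commute)
        then show ?thesis by simp
      next
        case False
        then have "sd s i = 0" using dd cne iln unfolding dval_def bidx_def by simp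
        then have "sum \<xi> (bedges X i) \<le> 0" using sle by (simp add: zero_ereal_def)
        then have "sc s i * sum \<xi> (bedges X i) \<le> 0" using ci by (simp add: mult_nonneg_nonpos)
        then show ?thesis using pBi by simp
      qed
    qed
  qed
  have pB': "\<forall>k\<in>{1..n}. ((sp s)(i := sp s i + sc s i * sum \<xi> (bedges X i))) k \<le> B k"
    using pB pi by auto
  show ?thesis unfolding Inv_def clinch_step_def Let_def
    using w' c0 pB' unfolding \<xi>_def[symmetric] X_def[symmetric] by simp
qed

lemma Inv_foldl:
  assumes "Inv n E f v B M' \<sigma> s" "finite E" "finite M'" "\<forall>j\<in>M'. 0 < j" "set bs \<subseteq> buyersN n M'"
  shows "Inv n E f v B M' \<sigma> (foldl (clinch_step n E f v B M' \<sigma>) s bs)"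
  using assms
proof (induction bs arbitrary: s)
  case Nil then show ?case by simp
next
  case (Cons b bs)
  then show ?case using Inv_step[of n E f v B M' \<sigma> s b] by simp
qed

lemma dval_upd: "k \<noteq> l \<Longrightarrow> dval n v B \<sigma> (c(l := x)) p k = dval n v B \<sigma> c p k"
  unfolding dval_def by simp

lemma Inv_round:
  assumes I: "Inv n E f v B M' \<sigma> s" and finE: "finite E" and finM: "finite M'"
    and M0: "\<forall>j\<in>M'. 0 < j" and eps: "0 \<le> \<epsilon>"
  shows "Inv n E f v B M' \<sigma> (pca_round n E f \<epsilon> v B M' \<sigma> s)"
proof -
  define bs where "bs = sorted_list_of_set (buyersN n M')"
  have finN: "finite (buyersN n M')" unfolding buyersN_def using finM by auto
  have sb: "set bs \<subseteq> buyersN n M'" unfolding bs_def using finN by simp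
  define s1 where "s1 = foldl (clinch_step n E f v B M' \<sigma>) s bs"
  have I1: "Inv n E f v B M' \<sigma> s1" unfolding s1_def by (rule Inv_foldl[OF I finE finM M0 sb])
  define l where "l = bs ! sl s1"
  define c' where "c' = (sc s1)(l := sc s1 l + \<epsilon>)"
  have dd: "(sd s1)(l := dval n v B \<sigma> c' (sp s1) l) = dval n v B \<sigma> c' (sp s1)"
  proof
    fix k show "((sd s1)(l := dval n v B \<sigma> c' (sp s1) l)) k = dval n v B \<sigma> c' (sp s1) k"
      using I1 dval_upd[of k l n v B \<sigma> "sc s1" "sc s1 l + \<epsilon>" "sp s1"] unfolding Inv_def c'_def
      by (cases "k = l") auto
  qed
  have c0: "\<forall>k. 0 \<le> c' k" using I1 eps unfolding Inv_def c'_def by auto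
  show ?thesis unfolding pca_round_def Let_def bs_def[symmetric] s1_def[symmetric] l_def[symmetric]
      c'_def[symmetric]
    using I1 dd c0 unfolding Inv_def by simp
qed

lemma Inv_init:
  assumes Msub: "M' \<subseteq> {1..m}"
    and f_nonneg: "\<forall>j \<in> {1..m}. \<forall>S. S \<subseteq> sedges E j \<longrightarrow> 0 \<le> f j S"
    and B_nonneg: "\<forall>i \<in> {1..n}. 0 \<le> B i"
  shows "Inv n E f v B M' \<sigma> pca_init"
proof -
  have fx: "0 \<le> fext n E f j F" if j: "j \<in> M'" and F: "F \<subseteq> sedges (edgesX n E M') j" for j F
  proof (cases "(n + j, j) \<in> F")
    case True
    then show ?thesis using f_nonneg j Msub unfolding fext_def by auto
  next
    case False
    have "F \<subseteq> sedges E j"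
    proof
      fix e assume e: "e \<in> F"
      then have "e \<in> edgesX n E M'" "snd e = j" using F unfolding sedges_def by auto
      then have "e \<in> E \<or> e = (n + j, j)" unfolding edgesX_def by auto
      then show "e \<in> sedges E j" using e False \<open>snd e = j\<close> unfolding sedges_def by auto
    qed
    then show ?thesis using f_nonneg j Msub False unfolding fext_def by auto
  qed
  have "(\<lambda>_. 0) \<in> Pprime n E f M'" unfolding Pprime_def using fx by auto
  moreover have "(\<lambda>_. \<infinity>) = dval n v B \<sigma> (\<lambda>_. 0) (\<lambda>_. 0)" unfolding dval_def by auto
  ultimately show ?thesis unfolding Inv_def pca_init_def using B_nonneg by simp
qed

lemma pca_nonneg:
  assumes Msub: "M' \<subseteq> {1..m}" and finE: "finite E"
    and f_nonneg: "\<forall>j \<in> {1..m}. \<forall>S. S \<subseteq> sedges E j \<longrightarrow> 0 \<le> f j S"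
    and B_nonneg: "\<forall>i \<in> {1..n}. 0 \<le> B i" and eps: "0 \<le> \<epsilon>"
  shows "0 \<le> sw (pca n E f \<epsilon> v B M' \<sigma>) e"
proof -
  have finM: "finite M'" using Msub finite_subset by blast
  have M0: "\<forall>j\<in>M'. 0 < j" using Msub by auto
  show ?thesis
  proof (cases "while_option (\<lambda>s. \<exists>i \<in> buyersN n M'. sd s i \<noteq> 0) (pca_round n E f \<epsilon> v B M' \<sigma>) pca_init")
    case None
    then show ?thesis unfolding pca_def by (simp add: pca_init_def)
  next
    case (Some t)
    have "Inv n E f v B M' \<sigma> t"
    proof (rule while_option_rule[where P="Inv n E f v B M' \<sigma>", OF _ Some])
      show "Inv n E f v B M' \<sigma> pca_init" by (rule Inv_init[OF Msub f_nonneg B_nonneg])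
      show "Inv n E f v B M' \<sigma> (pca_round n E f \<epsilon> v B M' \<sigma> s)" if "Inv n E f v B M' \<sigma> s" for s
        by (rule Inv_round[OF that finE finM M0 eps])
    qed
    then have "sw t \<in> Pprime n E f M'" unfolding Inv_def by blast
    then show ?thesis using Some Pprime_nonneg unfolding pca_def by simp
  qed
qed

lemma pointwise_ineq:
  fixes a b F sA sB :: real
  assumes a: "0 < a" and b: "0 < b" and F: "0 \<le> F" and sA: "0 \<le> sA" and sB: "0 \<le> sB"
    and zA: "\<not> (b \<le> a) \<Longrightarrow> sA = 0" and zB: "\<not> (a \<le> b) \<Longrightarrow> sB = 0"
  shows "(if b \<le> a then a * (F - sA) else 0) + (if a \<le> b then b * (F - sB) else 0)
         \<le> b * (F - sA) + a * (F - sB)"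
proof (cases "a = b")
  case True then show ?thesis by simp
next
  case False
  show ?thesis
  proof (cases "a < b")
    case True
    then have "sA = 0" using zA by simp
    moreover have "0 \<le> a * F" using a F by simp
    moreover have "0 \<le> (b - a) * sB" using True sB by simp
    ultimately show ?thesis using True by (simp add: algebra_simps)
  next
    case False
    then have ba: "b < a" using \<open>a \<noteq> b\<close> by simp
    then have "sB = 0" using zB by simp
    moreover have "0 \<le> b * F" using b F by simp
    moreover have "0 \<le> (a - b) * sA" using ba sA by simp
    ultimately show ?thesis using ba by (simp add: algebra_simps)
  qed
qed

theorem lemma4p6:
  fixes n m :: nat and E :: "(nat \<times> nat) set"
    and f :: "nat \<Rightarrow> (nat \<times> nat) set \<Rightarrow> real"
    and v B \<rho>a \<rho>b :: "nat \<Rightarrow> real" and \<epsilon> :: real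
  assumes E_sub: "E \<subseteq> {1..n} \<times> {1..m}"
    and f_empty: "\<forall>j \<in> {1..m}. f j {} = 0"
    and f_nonneg: "\<forall>j \<in> {1..m}. \<forall>S. S \<subseteq> sedges E j \<longrightarrow> 0 \<le> f j S"
    and f_mono: "\<forall>j \<in> {1..m}. \<forall>S T. S \<subseteq> T \<and> T \<subseteq> sedges E j \<longrightarrow> f j S \<le> f j T"
    and f_submod: "\<forall>j \<in> {1..m}. \<forall>S T. S \<subseteq> sedges E j \<and> T \<subseteq> sedges E j
                      \<longrightarrow> f j (S \<union> T) + f j (S \<inter> T) \<le> f j S + f j T"
    and v_pos: "\<forall>i \<in> {1..n}. 0 < v i"
    and B_nonneg: "\<forall>i \<in> {1..n}. 0 \<le> B i"
    and eps_pos: "0 < \<epsilon>"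
    and v_grid: "\<forall>i \<in> {1..n}. \<exists>k::nat. 0 < k \<and> v i = real k * \<epsilon>"
    and \<rho>a_pos: "\<forall>j \<in> {1..m}. 0 < \<rho>a j"
    and \<rho>b_pos: "\<forall>j \<in> {1..m}. 0 < \<rho>b j"
    and \<rho>a_grid: "\<forall>j \<in> {1..m}. \<exists>k::nat. 0 < k \<and> \<rho>a j = real k * \<epsilon>"
    and \<rho>b_grid: "\<forall>j \<in> {1..m}. \<exists>k::nat. 0 < k \<and> \<rho>b j = real k * \<epsilon>"
  shows "LW_mech n m E f \<epsilon> v B \<rho>a \<rho>b + LW_mech n m E f \<epsilon> v B \<rho>b \<rho>a
         \<ge> LW_PCA n E f \<epsilon> v B {j \<in> {1..m}. \<rho>a j \<ge> \<rho>b j} \<rho>a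
           + LW_PCA n E f \<epsilon> v B {j \<in> {1..m}. \<rho>a j \<le> \<rho>b j} \<rho>b"
proof -
  have finE: "finite E" using E_sub finite_subset by blast
  have epsn: "0 \<le> \<epsilon>" using eps_pos by simp
  define Ma where "Ma = {j \<in> {1..m}. \<rho>a j \<ge> \<rho>b j}"
  define Mb where "Mb = {j \<in> {1..m}. \<rho>a j \<le> \<rho>b j}"
  define WA where "WA = (\<lambda>e. if e \<in> E \<and> snd e \<in> Ma then sw (pca n E f \<epsilon> v B Ma \<rho>a) e else 0)"
  define WB where "WB = (\<lambda>e. if e \<in> E \<and> snd e \<in> Mb then sw (pca n E f \<epsilon> v B Mb \<rho>b) e else 0)"
  have mA: "mech_alloc n m E f \<epsilon> v B \<rho>b \<rho>a = WA" unfolding mech_alloc_def Let_def WA_def Ma_def by simp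
  have mB: "mech_alloc n m E f \<epsilon> v B \<rho>a \<rho>b = WB" unfolding mech_alloc_def Let_def WB_def Mb_def by simp
  have LA: "LW_PCA n E f \<epsilon> v B Ma \<rho>a = LW_sub n E f v B Ma \<rho>a WA" unfolding LW_PCA_def WA_def by simp
  have LB: "LW_PCA n E f \<epsilon> v B Mb \<rho>b = LW_sub n E f v B Mb \<rho>b WB" unfolding LW_PCA_def WB_def by simp
  have MaS: "Ma \<subseteq> {1..m}" and MbS: "Mb \<subseteq> {1..m}" unfolding Ma_def Mb_def by auto
  have WAnn: "0 \<le> WA e" for e
    unfolding WA_def using pca_nonneg[OF MaS finE f_nonneg B_nonneg epsn] by simp
  have WBnn: "0 \<le> WB e" for e
    unfolding WB_def using pca_nonneg[OF MbS finE f_nonneg B_nonneg epsn] by simp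
  have bA: "sum WA (bedges E i) = sum WA (bedges {e \<in> E. snd e \<in> Ma} i)" for i
    by (rule sum.mono_neutral_right) (use finE in \<open>auto simp: bedges_def WA_def\<close>)
  have bB: "sum WB (bedges E i) = sum WB (bedges {e \<in> E. snd e \<in> Mb} i)" for i
    by (rule sum.mono_neutral_right) (use finE in \<open>auto simp: bedges_def WB_def\<close>)
  define SA where "SA j = sum WA (sedges E j)" for j
  define SB where "SB j = sum WB (sedges E j)" for j
  define Fj where "Fj j = f j (sedges E j)" for j
  have SAnn: "0 \<le> SA j" for j unfolding SA_def using WAnn by (simp add: sum_nonneg)
  have SBnn: "0 \<le> SB j" for j unfolding SB_def using WBnn by (simp add: sum_nonneg)
  have SA0: "j \<notin> Ma \<Longrightarrow> SA j = 0" for j unfolding SA_def WA_def sedges_def by (rule sum.neutral) auto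
  have SB0: "j \<notin> Mb \<Longrightarrow> SB j = 0" for j unfolding SB_def WB_def sedges_def by (rule sum.neutral) auto
  have Fnn: "j \<in> {1..m} \<Longrightarrow> 0 \<le> Fj j" for j unfolding Fj_def using f_nonneg by blast
  have sMa: "(\<Sum>j\<in>Ma. \<rho>a j * (Fj j - SA j)) = (\<Sum>j\<in>{1..m}. if \<rho>b j \<le> \<rho>a j then \<rho>a j * (Fj j - SA j) else 0)"
    unfolding Ma_def by (rule sum.inter_filter) simp
  have sMb: "(\<Sum>j\<in>Mb. \<rho>b j * (Fj j - SB j)) = (\<Sum>j\<in>{1..m}. if \<rho>a j \<le> \<rho>b j then \<rho>b j * (Fj j - SB j) else 0)"
    unfolding Mb_def by (rule sum.inter_filter) simp
  have key: "(\<Sum>j\<in>Ma. \<rho>a j * (Fj j - SA j)) + (\<Sum>j\<in>Mb. \<rho>b j * (Fj j - SB j))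
     \<le> (\<Sum>j\<in>{1..m}. \<rho>b j * (Fj j - SA j)) + (\<Sum>j\<in>{1..m}. \<rho>a j * (Fj j - SB j))"
  proof -
    have "(\<Sum>j\<in>Ma. \<rho>a j * (Fj j - SA j)) + (\<Sum>j\<in>Mb. \<rho>b j * (Fj j - SB j))
      = (\<Sum>j\<in>{1..m}. (if \<rho>b j \<le> \<rho>a j then \<rho>a j * (Fj j - SA j) else 0)
           + (if \<rho>a j \<le> \<rho>b j then \<rho>b j * (Fj j - SB j) else 0))"
      unfolding sMa sMb by (simp add: sum.distrib)
    also have "\<dots> \<le> (\<Sum>j\<in>{1..m}. \<rho>b j * (Fj j - SA j) + \<rho>a j * (Fj j - SB j))"
    proof (rule sum_mono)
      fix j assume j: "j \<in> {1..m}"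
      show "(if \<rho>b j \<le> \<rho>a j then \<rho>a j * (Fj j - SA j) else 0)
           + (if \<rho>a j \<le> \<rho>b j then \<rho>b j * (Fj j - SB j) else 0)
           \<le> \<rho>b j * (Fj j - SA j) + \<rho>a j * (Fj j - SB j)"
        by (rule pointwise_ineq) (use j \<rho>a_pos \<rho>b_pos Fnn SAnn SBnn SA0 SB0 in \<open>auto simp: Ma_def Mb_def\<close>)
    qed
    also have "\<dots> = (\<Sum>j\<in>{1..m}. \<rho>b j * (Fj j - SA j)) + (\<Sum>j\<in>{1..m}. \<rho>a j * (Fj j - SB j))"
      by (simp add: sum.distrib)
    finally show ?thesis .
  qed
  have "LW_mech n m E f \<epsilon> v B \<rho>a \<rho>b + LW_mech n m E f \<epsilon> v B \<rho>b \<rho>a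
         \<ge> LW_PCA n E f \<epsilon> v B Ma \<rho>a + LW_PCA n E f \<epsilon> v B Mb \<rho>b"
    unfolding LW_mech_def mA mB LA LB LW_full_def LW_sub_def bA bB
    using key unfolding SA_def SB_def Fj_def by simp
  then show ?thesis unfolding Ma_def Mb_def .
qed

end
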